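(* Let $G$ be a graph containing no cycle of length 6, let $x\in V(G)$, and let $A$ be a bipartite connected component of $G[N_2(x)]$ with vertex sets of bipartition $V_1$ and $V_2$ such that $\min(|V_1|,|V_2|)\ge 2$. Then $|N(x)\cap N(V(A))|=1$.
   Context: All graphs are finite, simple and undirected; "containing no cycle of length 6" means having no subgraph (not necessarily induced) isomorphic to $C_6$. $N_i(S)$ denotes the set of vertices at distance exactly $i$ from the vertex set $S$, $N(S)=N_1(S)$, $N(v)=N(\{v\})$, $N_2(v)=N_2(\{v\})$. *)

theory Defs
  imports Main
begin

definition simple_graph :: "'a set \<Rightarrow> ('a \<Rightarrow> 'a \<Rightarrow> bool) \<Rightarrow> bool" where
  "simple_graph V E \<longleftrightarrow> finite V \<and> (\<forall>u v. E u v \<longrightarrow> u \<in> V \<and> v \<in> V)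
     \<and> (\<forall>u v. E u v \<longrightarrow> E v u) \<and> (\<forall>v. \<not> E v v)"

definition has_C6 :: "'a set \<Rightarrow> ('a \<Rightarrow> 'a \<Rightarrow> bool) \<Rightarrow> bool" where
  "has_C6 V E \<longleftrightarrow> (\<exists>c :: nat \<Rightarrow> 'a. (\<forall>i<6. c i \<in> V) \<and> inj_on c {0..<6}
      \<and> (\<forall>i<6. E (c i) (c ((i + 1) mod 6))))"

definition nbhd :: "'a set \<Rightarrow> ('a \<Rightarrow> 'a \<Rightarrow> bool) \<Rightarrow> 'a set \<Rightarrow> 'a set" where
  "nbhd V E S = {v \<in> V. v \<notin> S \<and> (\<exists>u\<in>S. E u v)}"

definition nbhd2 :: "'a set \<Rightarrow> ('a \<Rightarrow> 'a \<Rightarrow> bool) \<Rightarrow> 'a \<Rightarrow> 'a set" where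
  "nbhd2 V E x = {v \<in> V. v \<noteq> x \<and> \<not> E x v \<and> (\<exists>u. E x u \<and> E u v)}"

definition induced_adj :: "('a \<Rightarrow> 'a \<Rightarrow> bool) \<Rightarrow> 'a set \<Rightarrow> 'a \<Rightarrow> 'a \<Rightarrow> bool" where
  "induced_adj E S u v \<longleftrightarrow> u \<in> S \<and> v \<in> S \<and> E u v"

definition is_component :: "('a \<Rightarrow> 'a \<Rightarrow> bool) \<Rightarrow> 'a set \<Rightarrow> 'a set \<Rightarrow> bool" where
  "is_component E S C \<longleftrightarrow> (\<exists>v\<in>S. C = {w. (induced_adj E S)\<^sup>*\<^sup>* v w})"

definition is_bipartition :: "('a \<Rightarrow> 'a \<Rightarrow> bool) \<Rightarrow> 'a set \<Rightarrow> 'a set \<Rightarrow> 'a set \<Rightarrow> bool" where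
  "is_bipartition E C V1 V2 \<longleftrightarrow> V1 \<union> V2 = C \<and> V1 \<inter> V2 = {}
     \<and> (\<forall>u\<in>V1. \<forall>v\<in>V1. \<not> E u v) \<and> (\<forall>u\<in>V2. \<forall>v\<in>V2. \<not> E u v)"

end

theory Submission imports Defs begin

lemma c6I:
  assumes "distinct [a0,a1,a2,a3,a4,a5::'a]" "a0 \<in> V" "a1 \<in> V" "a2 \<in> V" "a3 \<in> V" "a4 \<in> V" "a5 \<in> V"
    "E a0 a1" "E a1 a2" "E a2 a3" "E a3 a4" "E a4 a5" "E a5 a0"
  shows "has_C6 V E"
proof -
  define c where "c = (\<lambda>i. [a0,a1,a2,a3,a4,a5] ! i)"
  have i6: "\<And>i::nat. i < 6 \<Longrightarrow> i = 0 \<or> i = 1 \<or> i = 2 \<or> i = 3 \<or> i = 4 \<or> i = 5" by auto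
  have "\<forall>i<6. c i \<in> V" using assms i6 unfolding c_def by fastforce
  moreover have "inj_on c {0..<6}"
    unfolding c_def by (rule inj_on_nth[OF assms(1)]) simp
  moreover have "\<forall>i<6. E (c i) (c ((i + 1) mod 6))"
  proof (intro allI impI)
    fix i :: nat assume "i < 6"
    then show "E (c i) (c ((i + 1) mod 6))" using i6[of i] assms unfolding c_def by auto
  qed
  ultimately show ?thesis unfolding has_C6_def by blast
qed

lemma rt_sym:
  assumes "\<And>u w. R u w \<Longrightarrow> R w u" "R\<^sup>*\<^sup>* a b"
  shows "R\<^sup>*\<^sup>* b a"
  using assms(2)
proof (induction rule: rtranclp_induct)
  case base then show ?case by simp
next
  case (step y z)
  then show ?case using assms(1) by (meson converse_rtranclp_into_rtranclp)
qed

lemma p4: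
  assumes Rsym: "\<And>u w. R u w \<Longrightarrow> R w u" and Rirr: "\<And>u. \<not> R u u"
    and Adef: "A = {w. R\<^sup>*\<^sup>* v0 w}"
    and bU: "V1 \<union> V2 = A" and bI: "V1 \<inter> V2 = {}"
    and i1: "\<forall>u\<in>V1. \<forall>v\<in>V1. \<not> R u v" and i2: "\<forall>u\<in>V2. \<forall>v\<in>V2. \<not> R u v"
    and c1: "card V1 \<ge> 2" and c2: "card V2 \<ge> 2"
  shows "\<exists>a b c d. R a b \<and> R b c \<and> R c d \<and> distinct [a,b,c,d] \<and> a \<in> A"
proof (rule ccontr)
  assume noP4: "\<not> ?thesis"
  have clos: "\<And>u z. u \<in> A \<Longrightarrow> R u z \<Longrightarrow> z \<in> A"
    using Adef by (auto intro: rtranclp.rtrancl_into_rtrancl)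
  have reach: "\<And>u w. u \<in> A \<Longrightarrow> w \<in> A \<Longrightarrow> R\<^sup>*\<^sup>* u w"
    using Adef rt_sym[of R, OF Rsym] by (meson mem_Collect_eq rtranclp_trans)
  have closB: "A \<subseteq> B" if "u \<in> A" "u \<in> B" "\<And>z t. z \<in> B \<Longrightarrow> R z t \<Longrightarrow> t \<in> B" for u B
  proof
    fix w assume "w \<in> A"
    then have "R\<^sup>*\<^sup>* u w" using reach that(1) by blast
    then show "w \<in> B"
      by (induction rule: rtranclp_induct) (use that in auto)
  qed
  have side: False if "V1 \<subseteq> {q} \<or> V2 \<subseteq> {q}" for q
  proof -
    have "card V1 \<le> 1 \<or> card V2 \<le> 1"
      using that card_mono[of "{q}" V1] card_mono[of "{q}" V2] by auto
    then show False using c1 c2 by linarith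
  qed
  have one_nb: False if pA: "p \<in> A" and pq: "R p q" and only: "\<And>z. R p z \<Longrightarrow> z = q" for p q
  proof -
    have qA: "q \<in> A" using clos pA pq by blast
    define B where "B = insert q {z. R q z}"
    have "A \<subseteq> B"
    proof (rule closB[OF qA])
      show "q \<in> B" by (simp add: B_def)
      fix z t assume zB: "z \<in> B" and zt: "R z t"
      show "t \<in> B"
      proof (cases "z = q")
        case True then show ?thesis using zt B_def by simp
      next
        case False
        then have qz: "R q z" using zB B_def by simp
        show ?thesis
        proof (cases "z = p")
          case True then show ?thesis using zt only B_def by simp
        next
          case zp: False
          show ?thesis
          proof (rule ccontr)
            assume "t \<notin> B"
            then have tq: "t \<noteq> q" using B_def by simp
            have tp: "t \<noteq> p"
            proof
              assume "t = p"
              then have "R p z" using zt Rsym by simp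
              then have "z = q" using only by simp
              then show False using qz Rirr by simp
            qed
            have zA: "z \<in> A" using clos qA qz by blast
            have tA: "t \<in> A" using clos zA zt by blast
            have "R t z" "R z q" "R q p" using Rsym zt qz pq by auto
            moreover have "distinct [t,z,q,p]" using tq tp zp Rirr zt qz pq by auto
            ultimately show False using noP4 tA by blast
          qed
        qed
      qed
    qed
    then have "\<forall>z\<in>A. z = q \<or> R q z" using B_def by auto
    then have "V1 \<subseteq> {q} \<or> V2 \<subseteq> {q}"
    proof -
      assume all: "\<forall>z\<in>A. z = q \<or> R q z"
      have "q \<in> V1 \<or> q \<in> V2" using qA bU by blast
      then show ?thesis
      proof
        assume "q \<in> V1"
        then have "V1 \<subseteq> {q}" using all bU i1 by blast
        then show ?thesis by simp
      next
        assume "q \<in> V2"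
        then have "V2 \<subseteq> {q}" using all bU i2 by blast
        then show ?thesis by simp
      qed
    qed
    then show False using side by blast
  qed
  have v0A: "v0 \<in> A" using Adef by simp
  obtain w where wA: "w \<in> A" and wv: "w \<noteq> v0"
  proof -
    have "\<not> V1 \<subseteq> {v0}" using side by blast
    then show ?thesis using that bU by blast
  qed
  have "R\<^sup>*\<^sup>* v0 w" using wA Adef by simp
  then obtain q where pq: "R v0 q" using wv by (metis converse_rtranclpE)
  have qA: "q \<in> A" using clos v0A pq by blast
  obtain r where pr: "R v0 r" "r \<noteq> q" using one_nb[OF v0A pq] by blast
  obtain s where qs: "R q s" "s \<noteq> v0" using one_nb[OF qA Rsym[OF pq]] by blast
  have rA: "r \<in> A" using clos v0A pr by blast
  have sA: "s \<in> A" using clos qA qs by blast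
  have rs: "r \<noteq> s"
  proof
    assume "r = s"
    then have "R v0 r" "R q r" "R v0 q" using pr qs pq by auto
    moreover have "v0 \<in> V1 \<or> v0 \<in> V2" "q \<in> V1 \<or> q \<in> V2" "r \<in> V1 \<or> r \<in> V2"
      using v0A qA rA bU by blast+
    ultimately show False using i1 i2 by metis
  qed
  have "R r v0" "R v0 q" "R q s" using pr qs pq Rsym by auto
  moreover have "distinct [r,v0,q,s]" using pr qs pq rs Rirr by auto
  ultimately show False using noP4 rA by blast
qed

theorem lemma2p5:
  fixes V :: "'a set" and E :: "'a \<Rightarrow> 'a \<Rightarrow> bool" and x :: 'a
    and A V1 V2 :: "'a set"
  assumes "simple_graph V E"
    and "\<not> has_C6 V E"
    and "x \<in> V"
    and "is_component E (nbhd2 V E x) A"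
    and "is_bipartition E A V1 V2"
    and "min (card V1) (card V2) \<ge> 2"
  shows "card (nbhd V E {x} \<inter> nbhd V E A) = 1"
proof -
  define N2 where "N2 = nbhd2 V E x"
  define R where "R = induced_adj E N2"
  have sym: "\<And>u v. E u v \<Longrightarrow> E v u" and irr: "\<And>v. \<not> E v v"
    and inV: "\<And>u v. E u v \<Longrightarrow> u \<in> V \<and> v \<in> V"
    using assms(1) unfolding simple_graph_def by blast+
  obtain v0 where v0: "v0 \<in> N2" and Adef: "A = {w. R\<^sup>*\<^sup>* v0 w}"
    using assms(4) unfolding is_component_def N2_def R_def by blast
  have Rsym: "\<And>u w. R u w \<Longrightarrow> R w u" unfolding R_def induced_adj_def using sym by blast
  have Rirr: "\<And>u. \<not> R u u" unfolding R_def induced_adj_def using irr by blast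
  have RE: "\<And>u w. R u w \<Longrightarrow> E u w \<and> u \<in> N2 \<and> w \<in> N2" unfolding R_def induced_adj_def by blast
  have AN2: "\<And>w. w \<in> A \<Longrightarrow> w \<in> N2"
  proof -
    fix w assume "w \<in> A"
    then have "R\<^sup>*\<^sup>* v0 w" using Adef by simp
    then show "w \<in> N2" by (cases rule: rtranclp.cases) (use v0 RE in auto)
  qed
  have clos: "\<And>u z. u \<in> A \<Longrightarrow> R u z \<Longrightarrow> z \<in> A"
    using Adef by (auto intro: rtranclp.rtrancl_into_rtrancl)
  have reach: "\<And>u w. u \<in> A \<Longrightarrow> w \<in> A \<Longrightarrow> R\<^sup>*\<^sup>* u w"
    using Adef rt_sym[of R, OF Rsym] by (meson mem_Collect_eq rtranclp_trans)
  have N2d: "\<And>v. v \<in> N2 \<Longrightarrow> v \<in> V \<and> v \<noteq> x \<and> \<not> E x v \<and> (\<exists>u. E x u \<and> E u v)"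
    unfolding N2_def nbhd2_def by blast
  have xN: "\<And>y. E x y \<Longrightarrow> y \<notin> N2" using N2d by blast
  have K: "y = y'" if "R w m" "R m u" "w \<noteq> u" "E x y" "E y u" "E x y'" "E y' w" for w m u y y'
  proof (rule ccontr)
    assume yy: "y \<noteq> y'"
    have w: "w \<in> N2" and m: "m \<in> N2" and u: "u \<in> N2" using that RE by blast+
    have "distinct [x, y', w, m, u, y]"
      using that yy xN[of y] xN[of y'] w m u N2d irr Rirr by auto
    moreover have "x \<in> V" "y' \<in> V" "w \<in> V" "m \<in> V" "u \<in> V" "y \<in> V"
      using assms(3) inV that w m u N2d by blast+
    moreover have "E x y'" "E y' w" "E w m" "E m u" "E u y" "E y x"
      using that RE sym by blast+
    ultimately have "has_C6 V E" by (rule c6I)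
    then show False using assms(2) by simp
  qed
  have bip: "V1 \<union> V2 = A" "V1 \<inter> V2 = {}" "\<forall>u\<in>V1. \<forall>v\<in>V1. \<not> R u v" "\<forall>u\<in>V2. \<forall>v\<in>V2. \<not> R u v"
    using assms(5) RE unfolding is_bipartition_def by blast+
  obtain a b c d where abcd: "R a b" "R b c" "R c d" "distinct [a,b,c,d]" "a \<in> A"
    using p4[OF Rsym Rirr Adef bip] assms(6) by auto
  have Ne: "\<And>w. w \<in> N2 \<Longrightarrow> \<exists>y. E x y \<and> E y w" using N2d by blast
  obtain y1 where y1: "E x y1" "E y1 a" using Ne RE abcd by blast
  obtain y2 where y2: "E x y2" "E y2 b" using Ne RE abcd by blast
  obtain yc where yc: "E x yc" "E yc c" using Ne RE abcd by blast
  obtain yd where yd: "E x yd" "E yd d" using Ne RE abcd by blast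
  have Ka: "\<And>y. E x y \<Longrightarrow> E y c \<Longrightarrow> y = y1" using K[of a b c] abcd y1 by auto
  have Kb: "\<And>y. E x y \<Longrightarrow> E y d \<Longrightarrow> y = y2" using K[of b c d] abcd y2 by auto
  have Ka': "\<And>y. E x y \<Longrightarrow> E y a \<Longrightarrow> y = yc" using K[of c b a] abcd yc Rsym by auto
  have Kb': "\<And>y. E x y \<Longrightarrow> E y b \<Longrightarrow> y = yd" using K[of d c b] abcd yd Rsym by auto
  have y1c: "E y1 c" using Ka yc by auto
  have y2d: "E y2 d" using Kb yd by auto
  have y12: "y1 = y2"
  proof (rule ccontr)
    assume ne: "y1 \<noteq> y2"
    have aN: "a \<in> N2" "b \<in> N2" "c \<in> N2" "d \<in> N2" using abcd RE by blast+
    have "distinct [y1, a, b, y2, d, c]"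
      using ne abcd aN xN[OF y1(1)] xN[OF y2(1)] by auto
    moreover have "y1 \<in> V" "a \<in> V" "b \<in> V" "y2 \<in> V" "d \<in> V" "c \<in> V"
      using inV y1 y2 by (auto simp: aN N2d)
    moreover have "E y1 a" "E a b" "E b y2" "E y2 d" "E d c" "E c y1"
      using y1 y2 y1c y2d abcd RE sym by blast+
    ultimately have "has_C6 V E" by (rule c6I)
    then show False using assms(2) by simp
  qed
  define S where "S = {w. \<forall>y. E x y \<and> E y w \<longrightarrow> y = y1}"
  have aS: "a \<in> S" using Ka' yc Ka S_def by auto
  have bS: "b \<in> S" using Kb' yd Kb y12 S_def by auto
  have inv: "w \<in> S \<and> (\<exists>u. R w u \<and> u \<in> S)" if "R\<^sup>*\<^sup>* a w" for w
    using that
  proof (induction rule: rtranclp_induct)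
    case base then show ?case using aS bS abcd by blast
  next
    case (step w w')
    then obtain u where wS: "w \<in> S" and wu: "R w u" and uS: "u \<in> S" by blast
    show ?case
    proof (cases "w' = u")
      case True then show ?thesis using uS wS step(2) Rsym by blast
    next
      case False
      obtain yu where yu: "E x yu" "E yu u" using Ne RE wu by blast
      have "yu = y1" using uS yu S_def by blast
      have "w' \<in> S" unfolding S_def mem_Collect_eq
      proof (intro allI impI)
        fix y assume "E x y \<and> E y w'"
        then have "yu = y" using K[of w' w u yu y, OF Rsym[OF step(2)] wu False yu] by blast
        then show "y = y1" using \<open>yu = y1\<close> by simp
      qed
      then show ?thesis using wS step(2) Rsym by blast
    qed
  qed
  have allS: "\<And>w. w \<in> A \<Longrightarrow> w \<in> S" using inv reach abcd(5) by blast
  have xA: "x \<notin> A" using AN2 N2d by blast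
  have "nbhd V E {x} \<inter> nbhd V E A = {y1}"
  proof
    show "nbhd V E {x} \<inter> nbhd V E A \<subseteq> {y1}"
    proof
      fix v assume "v \<in> nbhd V E {x} \<inter> nbhd V E A"
      then have "E x v" and "\<exists>w\<in>A. E w v" unfolding nbhd_def by auto
      then obtain w where "w \<in> A" "E v w" "E x v" using sym by blast
      then show "v \<in> {y1}" using allS S_def by auto
    qed
  next
    have "a \<in> N2" using abcd AN2 by blast
    then have "y1 \<notin> A" using xN[OF y1(1)] AN2 by blast
    moreover have "y1 \<in> V" "y1 \<noteq> x" using inV y1 irr by blast+
    ultimately show "{y1} \<subseteq> nbhd V E {x} \<inter> nbhd V E A"
      unfolding nbhd_def using y1 abcd(5) sym by auto
  qed
  then show ?thesis by simp
qed

end
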